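(* Let $Q_{\max}>0$ and let $a:(0,\infty)\to(0,\infty)$ be a strictly increasing, differentiable function (the effective bandwidth) with differentiable inverse. For a rate $r$ in the range of $a$, let $\theta(r)=a^{-1}(r)$ and define the queue violation probability $\epsilon_q(r)=\exp\{-\theta(r)Q_{\max}\}$. Let the SIR be a random variable with a probability density $f$ that is strictly positive on $(0,\infty)$, and define the link failure probability $\epsilon_r(r)=\mathbb{P}[\log(1+\mathrm{SIR})<r]$. Define the total error $\epsilon(r)=\epsilon_q(r)+\epsilon_r(r)-\epsilon_q(r)\epsilon_r(r)$. Then the equation $\epsilon_q(r)=\epsilon_r(r)$ has at most one root. Moreover, given a target error $\epsilon'\in(0,1)$, if $r^\ast$ is a root of $\epsilon_q(r)=\epsilon_r(r)$ and $$\epsilon_r(r^\ast)\le 1-\sqrt{1-\epsilon'},$$ then the target QoS $(\epsilon',Q_{\max})$ can be met by rate selection, i.e. there exists a rate $r$ (namely $r=r^\ast$) with $\epsilon(r)\le\epsilon'$.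
   Context: This formalizes the paper's approximation model: the queue violation probability at service rate $r=a(\theta)$ with tolerable queue length $Q_{\max}$ is approximated by $e^{-\theta Q_{\max}}$, the channel fails to support rate $r$ when the Shannon rate $\log(1+\mathrm{SIR})$ is below $r$, and the total error is approximated by $1-(1-\epsilon_q)(1-\epsilon_r)$. *)

theory Defs
  imports "HOL-Probability.Probability"
begin

definition theta_of :: "(real \<Rightarrow> real) \<Rightarrow> real \<Rightarrow> real" where
  "theta_of a r = inv_into {0<..} a r"

definition eps_q :: "(real \<Rightarrow> real) \<Rightarrow> real \<Rightarrow> real \<Rightarrow> real" where
  "eps_q a Qmax r = exp (- theta_of a r * Qmax)"

definition eps_r :: "'w measure \<Rightarrow> ('w \<Rightarrow> real) \<Rightarrow> real \<Rightarrow> real" where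
  "eps_r M SIR r = measure M {\<omega> \<in> space M. ln (1 + SIR \<omega>) < r}"

definition eps_total :: "(real \<Rightarrow> real) \<Rightarrow> real \<Rightarrow> 'w measure \<Rightarrow> ('w \<Rightarrow> real) \<Rightarrow> real \<Rightarrow> real" where
  "eps_total a Qmax M SIR r =
     eps_q a Qmax r + eps_r M SIR r - eps_q a Qmax r * eps_r M SIR r"

end

theory Submission
  imports Defs
begin

theorem theorem3:
  fixes a :: "real \<Rightarrow> real" and Qmax :: real
    and M :: "'w measure" and SIR :: "'w \<Rightarrow> real" and f :: "real \<Rightarrow> ennreal"
  assumes Qmax_pos: "Qmax > 0"
    and a_pos: "a ` {0<..} \<subseteq> {0<..}"
    and a_mono: "strict_mono_on {0<..} a"
    and a_diff: "\<forall>x>0. a differentiable (at x)"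
    and a_inv_diff: "\<forall>y \<in> a ` {0<..}. inv_into {0<..} a differentiable (at y)"
    and M_prob: "prob_space M"
    and SIR_dist: "distributed M lborel SIR f"
    and f_pos: "\<forall>x>0. f x > 0"
  shows "(\<forall>r1 \<in> a ` {0<..}. \<forall>r2 \<in> a ` {0<..}.
            eps_q a Qmax r1 = eps_r M SIR r1 \<longrightarrow> eps_q a Qmax r2 = eps_r M SIR r2
            \<longrightarrow> r1 = r2)
       \<and> (\<forall>eps' rstar. 0 < eps' \<and> eps' < 1 \<and> rstar \<in> a ` {0<..}
            \<and> eps_q a Qmax rstar = eps_r M SIR rstar
            \<and> eps_r M SIR rstar \<le> 1 - sqrt (1 - eps')
            \<longrightarrow> (\<exists>r \<in> a ` {0<..}. eps_total a Qmax M SIR r \<le> eps') \<and>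
                eps_total a Qmax M SIR rstar \<le> eps')"
proof -
  interpret P: prob_space M by (rule M_prob)
  have meas: "SIR \<in> borel_measurable M"
    using distributed_measurable[OF SIR_dist] by simp
  have sets: "\<And>r. {\<omega> \<in> space M. ln (1 + SIR \<omega>) < r} \<in> sets M"
    using meas by measurable
  have er_mono: "eps_r M SIR r1 \<le> eps_r M SIR r2" if "r1 \<le> r2" for r1 r2
    unfolding eps_r_def using that sets
    by (intro P.finite_measure_mono) auto
  have th: "theta_of a (a x) = x" if "x > 0" for x
    unfolding theta_of_def
    using a_mono that by (intro inv_into_f_f) (auto intro: strict_mono_on_imp_inj_on)
  have eq_dec: "eps_q a Qmax (a x2) < eps_q a Qmax (a x1)"
    if "0 < x1" "0 < x2" "a x1 < a x2" for x1 x2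
  proof -
    have "x1 < x2"
    proof (rule ccontr)
      assume "\<not> x1 < x2"
      hence "x2 \<le> x1" by simp
      hence "a x2 \<le> a x1" using a_mono that
        by (metis greaterThan_iff order_le_less strict_mono_onD)
      thus False using that by simp
    qed
    thus ?thesis unfolding eps_q_def using th that Qmax_pos by simp
  qed
  have part1: "\<forall>r1 \<in> a ` {0<..}. \<forall>r2 \<in> a ` {0<..}.
            eps_q a Qmax r1 = eps_r M SIR r1 \<longrightarrow> eps_q a Qmax r2 = eps_r M SIR r2
            \<longrightarrow> r1 = r2"
  proof (intro ballI impI)
    fix r1 r2 assume r1: "r1 \<in> a ` {0<..}" and r2: "r2 \<in> a ` {0<..}"
      and e1: "eps_q a Qmax r1 = eps_r M SIR r1" and e2: "eps_q a Qmax r2 = eps_r M SIR r2"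
    obtain x1 where x1: "x1 > 0" "r1 = a x1" using r1 by auto
    obtain x2 where x2: "x2 > 0" "r2 = a x2" using r2 by auto
    show "r1 = r2"
    proof (rule ccontr)
      assume "r1 \<noteq> r2"
      hence "r1 < r2 \<or> r2 < r1" by auto
      thus False
      proof
        assume "r1 < r2"
        thus False using eq_dec[of x1 x2] x1 x2 er_mono[of r1 r2] e1 e2 by simp
      next
        assume "r2 < r1"
        thus False using eq_dec[of x2 x1] x1 x2 er_mono[of r2 r1] e1 e2 by simp
      qed
    qed
  qed
  have part2: "eps_total a Qmax M SIR rstar \<le> eps'"
    if "0 < eps'" "eps' < 1" "eps_q a Qmax rstar = eps_r M SIR rstar"
       "eps_r M SIR rstar \<le> 1 - sqrt (1 - eps')" for eps' rstar
  proof -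
    define e where "e = eps_r M SIR rstar"
    define s where "s = sqrt (1 - eps')"
    have s0: "0 \<le> s" and s2: "s * s = 1 - eps'" using that unfolding s_def by auto
    have "s \<le> 1 - e" using that unfolding e_def s_def by simp
    hence "s * s \<le> (1 - e) * (1 - e)" using s0 by (intro mult_mono) auto
    hence "2 * e - e * e \<le> eps'" using s2 by (simp add: algebra_simps)
    thus ?thesis unfolding eps_total_def using that unfolding e_def
      by (simp add: algebra_simps)
  qed
  show ?thesis using part1 part2 by blast
qed

end
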